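(* Let $G$ be a strongly regular graph with parameters $(n,d,\lambda,\mu)$ and let $t=\sqrt{(\mu-\lambda)^2+4(d-\mu)}$. Then $\chi_v(G)=1+\frac{2d}{t+\mu-\lambda}=\chi_{sv}(G)$ and $\chi_v(\overline{G})=\frac{n(t+\mu-\lambda)}{2d+t+\mu-\lambda}=\chi_{sv}(\overline{G})$. Consequently $\chi_v(\overline{G})=\frac{n}{\chi_v(G)}$ and $\chi_{sv}(\overline{G})=\frac{n}{\chi_{sv}(G)}$.
   Context: A strongly regular graph with parameters $(n,d,\lambda,\mu)$ is a $d$-regular graph on $n$ vertices, neither complete nor edgeless, in which adjacent vertices have exactly $\lambda$ common neighbours and distinct nonadjacent vertices exactly $\mu$ common neighbours; $\overline{G}$ is the complement. For a graph on $n$ vertices with at least one edge, a vector $t$-coloring ($t\ge2$) assigns unit vectors $u_i\in\mathbb R^n$ to vertices with $u_i^{\mathrm T}u_j\le-\frac1{t-1}$ for every edge $\{i,j\}$, and a strict vector $t$-coloring requires equality on every edge; $\chi_v$ and $\chi_{sv}$ are the smallest $t\ge2$ admitting a vector, resp. strict vector, $t$-coloring (both equal $1$ for edgeless graphs). *)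

theory Defs
  imports "HOL-Analysis.Analysis"
begin

text \<open>Simple graphs on the finite vertex type 'a, given by an adjacency relation.
  The number of vertices is n = CARD('a); vectors live in real^'a, i.e. R^n.\<close>

definition simple_graph :: "('a \<Rightarrow> 'a \<Rightarrow> bool) \<Rightarrow> bool" where
  "simple_graph E \<longleftrightarrow> (\<forall>i j. E i j \<longrightarrow> E j i) \<and> (\<forall>i. \<not> E i i)"

definition complement :: "('a \<Rightarrow> 'a \<Rightarrow> bool) \<Rightarrow> 'a \<Rightarrow> 'a \<Rightarrow> bool" where
  "complement E = (\<lambda>i j. i \<noteq> j \<and> \<not> E i j)"

definition strongly_regular ::
  "('a::finite \<Rightarrow> 'a \<Rightarrow> bool) \<Rightarrow> nat \<Rightarrow> nat \<Rightarrow> nat \<Rightarrow> nat \<Rightarrow> bool" where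
  "strongly_regular E n d lam mu \<longleftrightarrow>
     simple_graph E \<and> CARD('a) = n \<and>
     (\<forall>i. card {j. E i j} = d) \<and>
     (\<exists>i j. E i j) \<and> (\<exists>i j. i \<noteq> j \<and> \<not> E i j) \<and>
     (\<forall>i j. E i j \<longrightarrow> card {k. E i k \<and> E j k} = lam) \<and>
     (\<forall>i j. i \<noteq> j \<and> \<not> E i j \<longrightarrow> card {k. E i k \<and> E j k} = mu)"

definition vector_coloring :: "('a::finite \<Rightarrow> 'a \<Rightarrow> bool) \<Rightarrow> real \<Rightarrow> bool" where
  "vector_coloring E t \<longleftrightarrow> t \<ge> 2 \<and>
     (\<exists>u :: 'a \<Rightarrow> real^'a. (\<forall>i. norm (u i) = 1) \<and>
        (\<forall>i j. E i j \<longrightarrow> u i \<bullet> u j \<le> - 1 / (t - 1)))"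

definition strict_vector_coloring :: "('a::finite \<Rightarrow> 'a \<Rightarrow> bool) \<Rightarrow> real \<Rightarrow> bool" where
  "strict_vector_coloring E t \<longleftrightarrow> t \<ge> 2 \<and>
     (\<exists>u :: 'a \<Rightarrow> real^'a. (\<forall>i. norm (u i) = 1) \<and>
        (\<forall>i j. E i j \<longrightarrow> u i \<bullet> u j = - 1 / (t - 1)))"

text \<open>The "smallest" t is rendered as the infimum (the infimum is attained by compactness).\<close>

definition chi_v :: "('a::finite \<Rightarrow> 'a \<Rightarrow> bool) \<Rightarrow> real" where
  "chi_v E = (if \<not> (\<exists>i j. E i j) then 1 else Inf {t. vector_coloring E t})"

definition chi_sv :: "('a::finite \<Rightarrow> 'a \<Rightarrow> bool) \<Rightarrow> real" where
  "chi_sv E = (if \<not> (\<exists>i j. E i j) then 1 else Inf {t. strict_vector_coloring E t})"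

end

theory Submission
  imports Defs
begin

definition adj :: "('a \<Rightarrow> 'a \<Rightarrow> bool) \<Rightarrow> 'a \<Rightarrow> 'a \<Rightarrow> real" where
  "adj E i j = (if E i j then 1 else 0)"

definition dl :: "'a \<Rightarrow> 'a \<Rightarrow> real" where "dl i j = (if i = j then 1 else 0)"

lemma sum_dl_right[simp]: "(\<Sum>b\<in>UNIV. f b * dl b (i::'a::finite)) = (f i :: real)"
proof -
  have "(\<Sum>b\<in>UNIV. f b * dl b i) = (\<Sum>b\<in>UNIV. if i = b then f b else 0)"
    by (rule sum.cong) (auto simp: dl_def)
  then show ?thesis by (simp add: sum.delta)
qed
lemma sum_dl_left[simp]: "(\<Sum>b\<in>UNIV. dl b (i::'a::finite) * f b) = (f i :: real)"
  using sum_dl_right[of f i] by (simp add: mult.commute)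
lemma sum_dl_right2[simp]: "(\<Sum>b\<in>UNIV. f b * dl (i::'a::finite) b) = (f i :: real)"
  using sum_dl_right[of f i] by (simp add: dl_def eq_commute)
lemma sum_dl2[simp]: "(\<Sum>b\<in>UNIV. dl (i::'a::finite) b) = (1::real)"
  using sum_dl_right2[of "\<lambda>_. 1" i] by simp
lemma sum_dl[simp]: "(\<Sum>b\<in>UNIV. dl b (i::'a::finite)) = (1::real)"
  using sum_dl_right[of "\<lambda>_. 1" i] by simp

lemma canc: "a \<noteq> 0 \<Longrightarrow> N \<noteq> 0 \<Longrightarrow> (a * b / N) / (a * c / N) = (b::real) / c"
  by simp

locale srg_spec =
  fixes E :: "'a::finite \<Rightarrow> 'a \<Rightarrow> bool" and d th ta m :: real
  assumes sg: "simple_graph E"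
  and edge: "\<exists>i j. E i j"
  and rows: "\<And>i. (\<Sum>j\<in>UNIV. adj E i j) = d"
  and key: "\<And>i k. (\<Sum>j\<in>UNIV. adj E i j * adj E j k) = (th + ta) * adj E i k - th * ta * dl i k + m"
  and lt: "ta < th" and tale: "ta \<le> 0" and thge: "th \<ge> 0"
begin

abbreviation "A \<equiv> adj E"
definition "N = real CARD('a)"

lemma Npos: "N > 0" by (simp add: N_def)

lemma symA: "A i j = A j i"
  using sg unfolding simple_graph_def adj_def by metis

lemma A0: "A i i = 0"
  using sg unfolding simple_graph_def adj_def by simp

lemma Asq: "A i j * A i j = A i j" by (simp add: adj_def)

lemma cols: "(\<Sum>i\<in>UNIV. A i j) = d"
  using rows[of j] by (simp add: symA)

lemma dpos: "d > 0"
proof -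
  obtain i j where e: "E i j" using edge by blast
  have "A i j \<le> (\<Sum>k\<in>UNIV. A i k)"
    by (rule member_le_sum) (auto simp: adj_def)
  then show ?thesis using e rows[of i] by (simp add: adj_def)
qed

lemma thta: "th * ta = m - d"
proof -
  have "(\<Sum>j\<in>UNIV. A i j * A j i) = d" for i
    using rows[of i] by (simp add: symA[of _ i] Asq)
  moreover have "(\<Sum>j\<in>UNIV. A i j * A j i) = - th * ta + m" for i
    using key[of i i] by (simp add: A0 dl_def)
  ultimately show ?thesis by (metis add.commute add_diff_cancel diff_minus_eq_add minus_mult_left)
qed

lemma Nm: "N * m = (d - th) * (d - ta)"
proof -
  fix i :: 'a
  have "(\<Sum>k\<in>UNIV. \<Sum>j\<in>UNIV. A i j * A j k) = (\<Sum>j\<in>UNIV. A i j * (\<Sum>k\<in>UNIV. A j k))"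
    by (subst sum.swap) (simp add: sum_distrib_left)
  also have "\<dots> = d * d" using rows by (simp add: sum_distrib_right[symmetric])
  finally have 1: "(\<Sum>k\<in>UNIV. \<Sum>j\<in>UNIV. A i j * A j k) = d * d" .
  have "(\<Sum>k\<in>UNIV. \<Sum>j\<in>UNIV. A i j * A j k) = (\<Sum>k\<in>UNIV. (th + ta) * A i k - th * ta * dl i k + m)"
    using key by simp
  also have "\<dots> = (th + ta) * d - th * ta + N * m"
    by (simp add: sum.distrib sum_subtractf sum_distrib_left[symmetric] rows N_def dl_def)
  finally show ?thesis using 1 thta by (simp add: algebra_simps)
qed

lemma Q:
  fixes x :: "'a \<Rightarrow> real"
  shows "(\<Sum>i\<in>UNIV. \<Sum>j\<in>UNIV. A i j * x i * x j) - ta * (\<Sum>i\<in>UNIV. (x i)\<^sup>2) \<ge> 0"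
proof -
  define y where "y i = (\<Sum>j\<in>UNIV. A i j * x j)" for i
  define S where "S = (\<Sum>i\<in>UNIV. x i)"
  define P where "P = (\<Sum>i\<in>UNIV. \<Sum>j\<in>UNIV. A i j * x i * x j)"
  define X where "X = (\<Sum>i\<in>UNIV. (x i)\<^sup>2)"
  define b where "b = (d - ta) / N"
  define w where "w i = y i - ta * x i - b * S" for i
  have F1: "(\<Sum>i\<in>UNIV. (y i)\<^sup>2) = (th + ta) * P - th * ta * X + m * S\<^sup>2"
  proof -
    have "(\<Sum>i\<in>UNIV. (y i)\<^sup>2) = (\<Sum>i\<in>UNIV. \<Sum>j\<in>UNIV. \<Sum>k\<in>UNIV. x j * x k * (A i j * A i k))"
      unfolding y_def power2_eq_square sum_product
      by (intro sum.cong refl) (simp add: algebra_simps)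
    also have "\<dots> = (\<Sum>j\<in>UNIV. \<Sum>k\<in>UNIV. x j * x k * (\<Sum>i\<in>UNIV. A i j * A i k))"
      by (subst sum.swap) (rule sum.cong[OF refl], subst sum.swap, simp add: sum_distrib_left)
    also have "\<dots> = (\<Sum>j\<in>UNIV. \<Sum>k\<in>UNIV. x j * x k * (\<Sum>i\<in>UNIV. A j i * A i k))"
    proof -
      have "(\<Sum>i\<in>UNIV. A i j * A i k) = (\<Sum>i\<in>UNIV. A j i * A i k)" for j k
        by (rule sum.cong) (simp, metis symA)
      then show ?thesis by simp
    qed
    also have "\<dots> = (\<Sum>j\<in>UNIV. \<Sum>k\<in>UNIV. x j * x k * ((th + ta) * A j k - th * ta * dl j k + m))"
      by (simp add: key)
    also have "\<dots> = (\<Sum>j\<in>UNIV. (th + ta) * (\<Sum>k\<in>UNIV. A j k * x j * x k) - th * ta * (\<Sum>k\<in>UNIV. (x j * x k) * dl j k) + m * (\<Sum>k\<in>UNIV. x j * x k))"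
      by (intro sum.cong refl) (simp add: sum.distrib sum_subtractf sum_distrib_left algebra_simps)
    also have "\<dots> = (\<Sum>j\<in>UNIV. (th + ta) * (\<Sum>k\<in>UNIV. A j k * x j * x k) - th * ta * (x j * x j) + m * (\<Sum>k\<in>UNIV. x j * x k))"
      by (subst sum_dl_right2) (rule refl)
    also have "\<dots> = (th + ta) * P - th * ta * X + m * S\<^sup>2"
      unfolding P_def X_def S_def power2_eq_square sum_product
      by (simp only: sum.distrib sum_subtractf sum_distrib_left)
    finally show ?thesis .
  qed
  have F2: "(\<Sum>i\<in>UNIV. y i * x i) = P"
    unfolding y_def P_def by (simp add: sum_distrib_right sum_distrib_left algebra_simps)
  have F3: "(\<Sum>i\<in>UNIV. y i) = d * S"
  proof -
    have "(\<Sum>i\<in>UNIV. y i) = (\<Sum>j\<in>UNIV. x j * (\<Sum>i\<in>UNIV. A i j))"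
      unfolding y_def by (subst sum.swap) (simp add: sum_distrib_left algebra_simps)
    also have "\<dots> = d * S" by (simp add: cols S_def sum_distrib_left algebra_simps)
    finally show ?thesis .
  qed
  have Wi: "(w i)\<^sup>2 = (y i)\<^sup>2 + ta\<^sup>2 * (x i)\<^sup>2 + b\<^sup>2 * S\<^sup>2
      - 2 * ta * (y i * x i) - 2 * b * S * y i + 2 * ta * b * S * x i" for i
    unfolding w_def by (simp add: power2_eq_square algebra_simps)
  have W: "(\<Sum>i\<in>UNIV. (w i)\<^sup>2) = (\<Sum>i\<in>UNIV. (y i)\<^sup>2) + ta\<^sup>2 * X + N * b\<^sup>2 * S\<^sup>2
      - 2 * ta * (\<Sum>i\<in>UNIV. y i * x i) - 2 * b * S * (\<Sum>i\<in>UNIV. y i) + 2 * ta * b * S * S"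
    unfolding Wi X_def N_def S_def
    by (simp only: sum.distrib sum_subtractf sum_distrib_left[symmetric] sum_constant card_UNIV_length_enum) simp
  have "(th - ta) * (P - ta * X) = (\<Sum>i\<in>UNIV. (w i)\<^sup>2) + S\<^sup>2 * (d - ta) * (th - ta) / N"
  proof -
    have "(\<Sum>i\<in>UNIV. (w i)\<^sup>2) = (th - ta) * (P - ta * X) + S\<^sup>2 * (m + N * b\<^sup>2 - 2 * b * (d - ta))"
      unfolding W F1 F2 F3 by (simp add: algebra_simps power2_eq_square)
    moreover have "m + N * b\<^sup>2 - 2 * b * (d - ta) = - (d - ta) * (th - ta) / N"
    proof -
      have mN: "m = (d - th) * (d - ta) / N" using Nm Npos by (simp add: field_simps)
      show ?thesis using Npos unfolding b_def mN by (simp add: field_simps power2_eq_square)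
    qed
    ultimately have G: "(\<Sum>i\<in>UNIV. (w i)\<^sup>2) = (th - ta) * (P - ta * X) + S\<^sup>2 * (- (d - ta) * (th - ta) / N)"
      by simp
    have "S\<^sup>2 * (- (d - ta) * (th - ta) / N) = - (S\<^sup>2 * (d - ta) * (th - ta) / N)"
      using Npos by (simp add: field_simps)
    with G show ?thesis by linarith
  qed
  moreover have "(\<Sum>i\<in>UNIV. (w i)\<^sup>2) \<ge> 0" by (simp add: sum_nonneg)
  moreover have "S\<^sup>2 * (d - ta) * (th - ta) / N \<ge> 0"
    using Npos dpos tale lt by simp
  ultimately have "(th - ta) * (P - ta * X) \<ge> 0" by linarith
  then show ?thesis using lt unfolding P_def X_def
    by (simp add: zero_le_mult_iff)
qed

lemma ta_le: "ta \<le> -1"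
proof -
  obtain i j where e: "E i j" using edge by blast
  have ij: "i \<noteq> j" using e sg unfolding simple_graph_def by auto
  define x where "x a = dl a i - dl a j" for a
  have inner: "(\<Sum>b\<in>UNIV. A a b * x a * x b) = (A a i - A a j) * x a" for a
  proof -
    have "(\<Sum>b\<in>UNIV. A a b * x a * x b) = (\<Sum>b\<in>UNIV. (A a b * x a) * dl b i) - (\<Sum>b\<in>UNIV. (A a b * x a) * dl b j)"
      unfolding x_def[of "b" for b] by (simp only: right_diff_distrib sum_subtractf)
    also have "\<dots> = (A a i - A a j) * x a" by (simp only: sum_dl_right) (simp add: algebra_simps)
    finally show ?thesis .
  qed
  have P: "(\<Sum>a\<in>UNIV. \<Sum>b\<in>UNIV. A a b * x a * x b) = -2"
  proof -
    have "(\<Sum>a\<in>UNIV. \<Sum>b\<in>UNIV. A a b * x a * x b) = (\<Sum>a\<in>UNIV. (A a i - A a j) * dl a i) - (\<Sum>a\<in>UNIV. (A a i - A a j) * dl a j)"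
      by (simp only: inner) (simp only: x_def right_diff_distrib sum_subtractf)
    also have "\<dots> = -2" using e by (simp add: A0 symA[of j i]) (simp add: adj_def)
    finally show ?thesis .
  qed
  have X: "(\<Sum>a\<in>UNIV. (x a)\<^sup>2) = 2"
  proof -
    have "(\<Sum>a\<in>UNIV. (x a)\<^sup>2) = (\<Sum>a\<in>UNIV. (dl a i - dl a j) * dl a i) - (\<Sum>a\<in>UNIV. (dl a i - dl a j) * dl a j)"
      unfolding x_def power2_eq_square by (simp only: right_diff_distrib sum_subtractf)
    also have "\<dots> = 2" using ij by (simp only: sum_dl_right) (simp add: dl_def)
    finally show ?thesis .
  qed
  show ?thesis using Q[of x] unfolding P X by simp
qed

lemma lower:
  assumes "vector_coloring E s"
  shows "1 - d / ta \<le> s"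
proof -
  obtain u :: "'a \<Rightarrow> real^'a" where u1: "\<And>i. norm (u i) = 1"
    and ue: "\<And>i j. E i j \<Longrightarrow> u i \<bullet> u j \<le> - 1 / (s - 1)" and s2: "s \<ge> 2"
    using assms unfolding vector_coloring_def by blast
  have "0 \<le> (\<Sum>c\<in>UNIV. (\<Sum>i\<in>UNIV. \<Sum>j\<in>UNIV. A i j * (u i $ c) * (u j $ c)) - ta * (\<Sum>i\<in>UNIV. (u i $ c)\<^sup>2))"
    by (rule sum_nonneg) (rule Q)
  also have "\<dots> = (\<Sum>i\<in>UNIV. \<Sum>j\<in>UNIV. A i j * (u i \<bullet> u j)) - ta * (\<Sum>i\<in>UNIV. u i \<bullet> u i)"
  proof -
    have 1: "(\<Sum>c\<in>UNIV. \<Sum>i\<in>UNIV. \<Sum>j\<in>UNIV. A i j * (u i $ c) * (u j $ c)) = (\<Sum>i\<in>UNIV. \<Sum>j\<in>UNIV. A i j * (u i \<bullet> u j))"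
      unfolding inner_vec_def inner_real_def
      by (subst sum.swap) (rule sum.cong[OF refl], subst sum.swap, simp add: sum_distrib_left mult.assoc)
    have 2: "(\<Sum>c\<in>UNIV. \<Sum>i\<in>UNIV. (u i $ c)\<^sup>2) = (\<Sum>i\<in>UNIV. u i \<bullet> u i)"
      unfolding inner_vec_def inner_real_def power2_eq_square by (rule sum.swap)
    show ?thesis by (simp add: sum_subtractf sum_distrib_left[symmetric] 1 2)
  qed
  also have "(\<Sum>i\<in>UNIV. u i \<bullet> u i) = N"
    using u1 by (simp add: power2_norm_eq_inner[symmetric] N_def)
  finally have lo: "ta * N \<le> (\<Sum>i\<in>UNIV. \<Sum>j\<in>UNIV. A i j * (u i \<bullet> u j))" by simp
  have "(\<Sum>i\<in>UNIV. \<Sum>j\<in>UNIV. A i j * (u i \<bullet> u j)) \<le> (\<Sum>i\<in>UNIV. \<Sum>j\<in>UNIV. A i j * (- 1 / (s - 1)))"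
    by (intro sum_mono) (auto simp: adj_def dest: ue)
  also have "\<dots> = - 1 / (s - 1) * (N * d)"
    by (simp only: sum_distrib_right[symmetric] rows) (simp add: N_def)
  finally have "ta * N \<le> - 1 / (s - 1) * (N * d)" using lo by linarith
  also have "- 1 / (s - 1) * (N * d) = (- d / (s - 1)) * N" by simp
  finally have "ta \<le> - d / (s - 1)" using Npos by (meson mult_right_le_imp_le)
  then have "ta * (s - 1) \<le> - d" using s2 by (simp add: field_simps)
  then have "- d / ta \<le> s - 1" using ta_le by (simp add: field_simps)
  then show ?thesis by simp
qed

definition "cc = (d - th) / N"
definition vv :: "'a \<Rightarrow> real^'a" where "vv i = (\<chi> k. A k i - th * dl k i - cc)"

lemma gram: "vv i \<bullet> vv j = (th - ta) * (th * dl i j - A i j) + (d - th) * (th - ta) / N"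
proof -
  have pt: "(A k i - th * dl k i - cc) * (A k j - th * dl k j - cc) =
     A i k * A k j - th * (A k i * dl k j) - cc * A k i - th * (dl k i * A k j)
     + th * th * (dl k i * dl k j) + th * cc * dl k i - cc * A k j + cc * th * dl k j + cc * cc" for k
    by (simp add: algebra_simps symA[of k i])
  have "vv i \<bullet> vv j = (\<Sum>k\<in>UNIV. (A k i - th * dl k i - cc) * (A k j - th * dl k j - cc))"
    unfolding vv_def inner_vec_def inner_real_def by simp
  also have "\<dots> = (\<Sum>k\<in>UNIV. A i k * A k j) - th * (\<Sum>k\<in>UNIV. A k i * dl k j) - cc * (\<Sum>k\<in>UNIV. A k i)
     - th * (\<Sum>k\<in>UNIV. dl k i * A k j) + th * th * (\<Sum>k\<in>UNIV. dl k i * dl k j) + th * cc * (\<Sum>k\<in>UNIV. dl k i)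
     - cc * (\<Sum>k\<in>UNIV. A k j) + cc * th * (\<Sum>k\<in>UNIV. dl k j) + (\<Sum>k::'a\<in>UNIV. cc * cc)"
    unfolding pt by (simp only: sum.distrib sum_subtractf sum_distrib_left)
  also have "\<dots> = (th + ta) * A i j - th * ta * dl i j + m - th * A i j - cc * d
     - th * A i j + th * th * dl i j + th * cc - cc * d + cc * th + N * cc * cc"
    by (simp only: key sum_dl_right sum_dl_left sum_dl cols) (simp add: N_def symA[of j i] dl_def)
  also have "\<dots> = (th - ta) * (th * dl i j - A i j) + (m - 2 * cc * (d - th) + N * cc * cc)"
    using thta by (simp add: algebra_simps)
  also have "m - 2 * cc * (d - th) + N * cc * cc = (d - th) * (th - ta) / N"
  proof -
    have mN: "m = (d - th) * (d - ta) / N" using Nm Npos by (simp add: field_simps)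
    show ?thesis using Npos unfolding cc_def mN by (simp add: field_simps)
  qed
  finally show ?thesis .
qed

definition "DD = (th - ta) * th + (d - th) * (th - ta) / N"

lemma DDpos: "DD > 0"
proof -
  have N1: "N \<ge> 1" unfolding N_def by (simp add: Suc_le_eq)
  have "th + (d - th) / N = ((N - 1) * th + d) / N" using Npos by (simp add: field_simps)
  also have "\<dots> > 0" using N1 thge dpos Npos by (intro divide_pos_pos add_nonneg_pos) auto
  finally have "th + (d - th) / N > 0" .
  then have "(th - ta) * (th + (d - th) / N) > 0" using lt by simp
  then show ?thesis unfolding DD_def by (simp add: algebra_simps)
qed

definition uu :: "'a \<Rightarrow> real^'a" where "uu i = (1 / sqrt DD) *\<^sub>R vv i"

lemma uu_inner: "uu i \<bullet> uu j = (vv i \<bullet> vv j) / DD"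
  using DDpos unfolding uu_def by (simp add: real_sqrt_mult[symmetric])

lemma uu_norm: "norm (uu i) = 1"
proof -
  have "uu i \<bullet> uu i = 1" unfolding uu_inner gram using DDpos
    by (simp add: A0 dl_def DD_def)
  then show ?thesis by (metis norm_eq_sqrt_inner real_sqrt_one)
qed

lemma uu_edge: assumes "E i j" shows "uu i \<bullet> uu j = ta / d"
proof -
  have ij: "i \<noteq> j" using assms sg unfolding simple_graph_def by auto
  have e: "vv i \<bullet> vv j = (th - ta) * (d - th - N) / N"
    unfolding gram using assms ij Npos by (simp add: adj_def dl_def field_simps)
  have D: "DD = (th - ta) * (N * th + d - th) / N"
    unfolding DD_def using Npos by (simp add: field_simps)
  have N1: "N \<ge> 1" unfolding N_def by (simp add: Suc_le_eq)
  have "(N - 1) * th \<ge> 0" using N1 thge by simp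
  then have pos: "N * th + d - th > 0" using dpos by (simp add: algebra_simps)
  have "uu i \<bullet> uu j = (d - th - N) / (N * th + d - th)"
    unfolding uu_inner e D using lt Npos by (intro canc) auto
  also have "\<dots> = ta / d"
  proof -
    have c: "d * (d - th - N) = ta * (N * th + d - th)"
    proof -
      have "N * m = N * d + N * (th * ta)" using thta by (simp add: algebra_simps) (metis distrib_right mult.commute mult.left_commute)
      then show ?thesis using Nm by (simp add: algebra_simps)
    qed
    show ?thesis using c pos dpos by (simp add: field_simps)
  qed
  finally show ?thesis .
qed

lemma ta_ge: "- d \<le> ta"
proof -
  obtain i j where e: "E i j" using edge by blast
  have "\<bar>uu i \<bullet> uu j\<bar> \<le> norm (uu i) * norm (uu j)" by (rule Cauchy_Schwarz_ineq2)
  then have "\<bar>uu i \<bullet> uu j\<bar> \<le> 1" using uu_norm by simp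
  then have "- 1 \<le> uu i \<bullet> uu j" by linarith
  then have "- 1 \<le> ta / d" using uu_edge[OF e] by simp
  then show ?thesis using dpos by (simp add: field_simps)
qed

lemma strict: "strict_vector_coloring E (1 - d / ta)"
proof -
  have tan: "ta < 0" using ta_le by simp
  have "2 \<le> 1 - d / ta" using ta_ge tan by (simp add: field_simps)
  moreover have "- 1 / (1 - d / ta - 1) = ta / d" using tan dpos by (simp add: field_simps)
  ultimately show ?thesis unfolding strict_vector_coloring_def
    using uu_norm uu_edge by (intro conjI exI[of _ uu]) auto
qed

lemma strict_imp: "strict_vector_coloring E s \<Longrightarrow> vector_coloring E s"
  unfolding strict_vector_coloring_def vector_coloring_def
  apply (elim conjE exE) apply (intro conjI exI) by auto

lemma chis: "chi_v E = 1 - d / ta" "chi_sv E = 1 - d / ta"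
proof -
  have sv: "vector_coloring E (1 - d / ta)" using strict by (rule strict_imp)
  show "chi_v E = 1 - d / ta" unfolding chi_v_def using edge
    by (simp, intro cInf_eq_minimum) (use sv lower in auto)
  show "chi_sv E = 1 - d / ta" unfolding chi_sv_def using edge
    by (simp, intro cInf_eq_minimum)
       (use strict lower strict_imp in auto)
qed

lemma dl_sym: "dl i j = dl j i" by (simp add: dl_def eq_commute)

lemma adj_compl: "adj (complement E) i j = 1 - dl i j - A i j"
  using sg unfolding adj_def dl_def complement_def simple_graph_def by auto

lemma compl:
  assumes ne: "\<exists>i j. i \<noteq> j \<and> \<not> E i j"
  shows "srg_spec (complement E) (N - 1 - d) (-1 - ta) (-1 - th) (N - 2 * d + m + th + ta)"
proof
  show "simple_graph (complement E)"
    using sg unfolding simple_graph_def complement_def by auto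
  show "\<exists>i j. complement E i j" using ne unfolding complement_def by auto
  show "(\<Sum>j\<in>UNIV. adj (complement E) i j) = N - 1 - d" for i
    unfolding adj_compl by (simp add: sum_subtractf rows N_def)
  show "(\<Sum>j\<in>UNIV. adj (complement E) i j * adj (complement E) j k) =
    (-1 - ta + (-1 - th)) * adj (complement E) i k - (-1 - ta) * (-1 - th) * dl i k + (N - 2 * d + m + th + ta)" for i k
  proof -
    have pt: "(1 - dl i j - A i j) * (1 - dl j k - A j k) =
      1 - dl j k - A j k - dl j i + dl j i * dl j k + dl j i * A j k - A i j + A i j * dl j k + A i j * A j k" for j
      by (simp add: algebra_simps dl_sym[of i j])
    have "(\<Sum>j\<in>UNIV. adj (complement E) i j * adj (complement E) j k) =
      (\<Sum>j\<in>UNIV. (1 - dl i j - A i j) * (1 - dl j k - A j k))" unfolding adj_compl by simp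
    also have "\<dots> = (\<Sum>j::'a\<in>UNIV. 1) - (\<Sum>j\<in>UNIV. dl j k) - (\<Sum>j\<in>UNIV. A j k) - (\<Sum>j\<in>UNIV. dl j i)
       + (\<Sum>j\<in>UNIV. dl j i * dl j k) + (\<Sum>j\<in>UNIV. dl j i * A j k) - (\<Sum>j\<in>UNIV. A i j)
       + (\<Sum>j\<in>UNIV. A i j * dl j k) + (\<Sum>j\<in>UNIV. A i j * A j k)"
      unfolding pt by (simp only: sum.distrib sum_subtractf)
    also have "\<dots> = N - 1 - d - 1 + dl i k + A i k - d + A i k + ((th + ta) * A i k - th * ta * dl i k + m)"
      by (simp only: sum_dl sum_dl_left sum_dl_right cols rows key) (simp add: N_def dl_sym[of k i])
    also have "\<dots> = (-1 - ta + (-1 - th)) * (1 - dl i k - A i k) - (-1 - ta) * (-1 - th) * dl i k + (N - 2 * d + m + th + ta)"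
      by (simp add: algebra_simps)
    finally show ?thesis unfolding adj_compl .
  qed
  show "-1 - th < -1 - ta" using lt by simp
  show "-1 - th \<le> 0" using thge by simp
  show "0 \<le> -1 - ta" using ta_le by simp
qed

end

lemma sum_adj_card: "(\<Sum>j\<in>(UNIV::'a::finite set). adj E i j * adj E j k) = real (card {j. E i j \<and> E j k})"
proof -
  have "(\<Sum>j\<in>(UNIV::'a set). adj E i j * adj E j k) = (\<Sum>j\<in>UNIV. if E i j \<and> E j k then 1 else 0)"
    by (rule sum.cong) (auto simp: adj_def)
  also have "\<dots> = real (card {j. E i j \<and> E j k})"
    by (simp add: sum.If_cases)
  finally show ?thesis .
qed

lemma sum_adj_card1: "(\<Sum>j\<in>(UNIV::'a::finite set). adj E i j) = real (card {j. E i j})"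
proof -
  have "(\<Sum>j\<in>(UNIV::'a set). adj E i j) = (\<Sum>j\<in>UNIV. if E i j then 1 else 0)"
    by (rule sum.cong) (auto simp: adj_def)
  also have "\<dots> = real (card {j. E i j})"
    by (simp add: sum.If_cases)
  finally show ?thesis .
qed

theorem mainTheorem10:
  fixes E :: "'a::finite \<Rightarrow> 'a \<Rightarrow> bool" and n d lam mu :: nat
  assumes "strongly_regular E n d lam mu"
  defines "t \<equiv> sqrt ((real mu - real lam)\<^sup>2 + 4 * (real d - real mu))"
  shows "chi_v E = 1 + 2 * real d / (t + real mu - real lam) \<and>
         chi_sv E = 1 + 2 * real d / (t + real mu - real lam) \<and>
         chi_v (complement E) =
           real n * (t + real mu - real lam) / (2 * real d + t + real mu - real lam) \<and>
         chi_sv (complement E) =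
           real n * (t + real mu - real lam) / (2 * real d + t + real mu - real lam) \<and>
         chi_v (complement E) = real n / chi_v E \<and>
         chi_sv (complement E) = real n / chi_sv E"
proof -
  have sg: "simple_graph E" and cardn: "CARD('a) = n" and deg: "\<And>i. card {j. E i j} = d"
    and edge: "\<exists>i j. E i j" and ne: "\<exists>i j. i \<noteq> j \<and> \<not> E i j"
    and cl: "\<And>i j. E i j \<Longrightarrow> card {k. E i k \<and> E j k} = lam"
    and cm: "\<And>i j. i \<noteq> j \<Longrightarrow> \<not> E i j \<Longrightarrow> card {k. E i k \<and> E j k} = mu"
    using assms(1) unfolding strongly_regular_def by auto
  have symE: "E i j \<Longrightarrow> E j i" for i j using sg unfolding simple_graph_def by blast
  have irr: "\<not> E i i" for i using sg unfolding simple_graph_def by blast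
  have mud: "mu \<le> d"
  proof -
    obtain i j where "i \<noteq> j" "\<not> E i j" using ne by blast
    then have "mu = card {k. E i k \<and> E j k}" using cm by simp
    also have "\<dots> \<le> card {k. E i k}" by (rule card_mono) auto
    finally show ?thesis using deg by simp
  qed
  have lamd: "lam < d"
  proof -
    obtain i j where e: "E i j" using edge by blast
    then have "lam = card {k. E i k \<and> E j k}" using cl by simp
    also have "\<dots> < card {k. E i k}" by (rule psubset_card_mono) (use e irr in auto)
    finally show ?thesis using deg by simp
  qed
  define th where "th = (real lam - real mu + t) / 2"
  define ta where "ta = (real lam - real mu - t) / 2"
  have argpos: "(real mu - real lam)\<^sup>2 + 4 * (real d - real mu) > 0"
  proof (cases "mu < d")
    case True then show ?thesis by (simp add: add_nonneg_pos)
  next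
    case False then have "mu = d" using mud by simp
    then show ?thesis using lamd by simp
  qed
  have t2: "t\<^sup>2 = (real mu - real lam)\<^sup>2 + 4 * (real d - real mu)"
    unfolding t_def using argpos by simp
  have tpos: "t > 0" unfolding t_def using argpos by simp
  have tge: "\<bar>real lam - real mu\<bar> \<le> t"
  proof -
    have "sqrt ((real mu - real lam)\<^sup>2) \<le> t" unfolding t_def
      using mud by (intro real_sqrt_le_mono) simp
    then show ?thesis by simp
  qed
  have sp: "th + ta = real lam - real mu" unfolding th_def ta_def by (simp add: field_simps)
  have pr: "th * ta = real mu - real d"
  proof -
    have "th * ta = ((real lam - real mu)\<^sup>2 - t\<^sup>2) / 4"
      unfolding th_def ta_def by (simp add: power2_eq_square algebra_simps)
    then show ?thesis unfolding t2 by (simp add: power2_eq_square algebra_simps)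
  qed
  interpret S: srg_spec E "real d" th ta "real mu"
  proof
    show "simple_graph E" by (rule sg)
    show "\<exists>i j. E i j" by (rule edge)
    show "(\<Sum>j\<in>UNIV. adj E i j) = real d" for i by (simp add: sum_adj_card1 deg)
    show "(\<Sum>j\<in>UNIV. adj E i j * adj E j k) = (th + ta) * adj E i k - th * ta * dl i k + real mu" for i k
    proof -
      have "{j. E i j \<and> E j k} = {j. E i j \<and> E k j}" using symE by blast
      then have c: "(\<Sum>j\<in>UNIV. adj E i j * adj E j k) = real (card {j. E i j \<and> E k j})"
        by (simp add: sum_adj_card)
      show ?thesis
      proof (cases "i = k")
        case True then show ?thesis using c deg irr by (simp add: adj_def dl_def pr)
      next
        case False
        show ?thesis
        proof (cases "E i k")
          case True then show ?thesis using c cl False by (simp add: adj_def dl_def sp)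
        next
          case nE: False then show ?thesis using c cm False by (simp add: adj_def dl_def)
        qed
      qed
    qed
    show "ta < th" unfolding th_def ta_def using tpos by simp
    show "ta \<le> 0" unfolding ta_def using tge by simp
    show "0 \<le> th" unfolding th_def using tge by simp
  qed
  interpret C: srg_spec "complement E" "S.N - 1 - real d" "-1 - ta" "-1 - th" "S.N - 2 * real d + real mu + th + ta"
    by (rule S.compl[OF ne])
  have Nn: "S.N = real n" unfolding S.N_def using cardn by simp
  have tan: "ta < 0" using S.ta_le by simp
  have dta: "real d - ta > 0" using tan by simp
  have e1: "1 - real d / ta = 1 + 2 * real d / (t + real mu - real lam)"
  proof -
    have "t + real mu - real lam = - 2 * ta" unfolding ta_def by (simp add: field_simps)
    then show ?thesis using tan by simp
  qed
  have e2: "1 - (S.N - 1 - real d) / (-1 - th) = real n * (t + real mu - real lam) / (2 * real d + t + real mu - real lam)"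
  proof -
    have a: "t + real mu - real lam = - 2 * ta" unfolding ta_def by (simp add: field_simps)
    have b: "2 * real d + t + real mu - real lam = 2 * (real d - ta)" unfolding ta_def by (simp add: field_simps)
    have rhs: "real n * (t + real mu - real lam) / (2 * real d + t + real mu - real lam) = - S.N * ta / (real d - ta)"
      unfolding a b Nn using dta by (simp add: field_simps)
    have th1: "1 + th > 0" using S.thge by simp
    have key: "(S.N + th - real d) * (real d - ta) = - S.N * ta * (1 + th)"
    proof -
      have "S.N * real mu = (real d - th) * (real d - ta)" by (rule S.Nm)
      then show ?thesis using S.thta by (simp add: algebra_simps) (metis distrib_left mult.commute mult.left_commute)
    qed
    have "1 - (S.N - 1 - real d) / (-1 - th) = (S.N + th - real d) / (1 + th)"
      using th1 by (simp add: field_simps)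
    also have "\<dots> = - S.N * ta / (real d - ta)"
      using th1 dta key by (simp add: field_simps)
    finally show ?thesis using rhs by simp
  qed
  have e3: "real n * (t + real mu - real lam) / (2 * real d + t + real mu - real lam) = real n / (1 - real d / ta)"
  proof -
    have a: "t + real mu - real lam = - 2 * ta" unfolding ta_def by (simp add: field_simps)
    have b: "2 * real d + t + real mu - real lam = 2 * (real d - ta)" unfolding ta_def by (simp add: field_simps)
    show ?thesis unfolding a b using tan dta by (simp add: field_simps)
  qed
  show ?thesis using S.chis C.chis e1 e2 e3 by simp
qed

end
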